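(* For each fixed $n$, there are only finitely many balls $B(v,n,K)$ ($v$ a vertex of $K$) up to cell-preserving isomorphism.
   Context: $K$ is the pentagonal combinatorial tiling: a 2-dimensional CW-complex homeomorphic to the open disk, obtained as follows. The subdivision rule $\omega$ acts on a pentagon with boundary vertices $v_1,\dots,v_5$ in cyclic order (indices mod 5): add a vertex $m_i$ inside each edge $v_iv_{i+1}$, interior vertices $c_1,\dots,c_5$, edges $c_ic_{i+1}$ and $c_im_i$, and replace the face by the central pentagon $c_1\cdots c_5$ and petals $v_i\,m_i\,c_i\,c_{i-1}\,m_{i-1}$. $K_0$ is one pentagon, $K_n=\omega^n(K_0)$, $K_n$ embeds onto the central superpentagon $\omega^n(\text{central face of }\omega(K_0))$ of $K_{n+1}$, and $K$ is the direct limit. $B(v,n,K)$ is the subcomplex of $K$ consisting of the faces all of whose vertices are at edge-path distance at most $n$ from $v$, with their edges and vertices. *)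

theory Defs
  imports Main "HOL-Library.FSet"
begin

text \<open>Base i: the i-th vertex of the initial pentagon; Mid S: the new vertex inside the
edge with endpoint set S; Cen l i: the interior vertex c_i created in the face whose
boundary cycle is the list l.\<close>

datatype vert = Base nat | Mid "vert fset" | Cen "vert list" nat

text \<open>A pentagonal face is stored as the cyclic list [v0,...,v4] of its boundary vertices.\<close>

definition P0 :: "vert list" where
  "P0 = map Base [0..<5]"

definition nxt :: "nat \<Rightarrow> nat" where "nxt i = (i + 1) mod 5"
definition prv :: "nat \<Rightarrow> nat" where "prv i = (i + 4) mod 5"

definition midv :: "vert list \<Rightarrow> nat \<Rightarrow> vert" where
  "midv l i = Mid {| l ! i, l ! nxt i |}"

definition cenv :: "vert list \<Rightarrow> nat \<Rightarrow> vert" where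
  "cenv l i = Cen l i"

definition central :: "vert list \<Rightarrow> vert list" where
  "central l = map (cenv l) [0..<5]"

definition petal :: "vert list \<Rightarrow> nat \<Rightarrow> vert list" where
  "petal l i = [l ! i, midv l i, cenv l i, cenv l (prv i), midv l (prv i)]"

definition omega :: "vert list set \<Rightarrow> vert list set" where
  "omega F = (\<Union>l\<in>F. insert (central l) {petal l i | i. i < 5})"

definition Kn :: "nat \<Rightarrow> vert list set" where
  "Kn n = (omega ^^ n) {P0}"

definition face_edges :: "vert list \<Rightarrow> vert set set" where
  "face_edges l = {{l ! i, l ! nxt i} | i. i < 5}"

definition lverts :: "vert list set \<Rightarrow> vert set" where
  "lverts F = (\<Union>l\<in>F. set l)"

definition ledges :: "vert list set \<Rightarrow> vert set set" where
  "ledges F = (\<Union>l\<in>F. face_edges l)"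

text \<open>The embedding K_n \<rightarrow> K_(n+1) onto the central superpentagon: it is induced by
v_i \<mapsto> c_i (the central face of omega(K_0)), propagated through the subdivisions.\<close>

primrec emb :: "vert \<Rightarrow> vert" where
  "emb (Base i) = Cen P0 i"
| "emb (Mid S) = Mid (fimage emb S)"
| "emb (Cen l i) = Cen (map emb l) i"

text \<open>A point of the direct limit is the equivalence class of (n,v), v a vertex of K_n,
where (n,v) ~ (m,w) iff they agree after embedding both into K_(n+m).\<close>

definition cls :: "nat \<Rightarrow> vert \<Rightarrow> (nat \<times> vert) set" where
  "cls n v = {(m, w). (emb ^^ n) w = (emb ^^ m) v}"

text \<open>A 2-complex: vertices, edges (as sets of their two endpoints) and faces (as sets of
their boundary edges).\<close>

type_synonym 'a cx = "'a set \<times> 'a set set \<times> 'a set set set"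

definition KV :: "(nat \<times> vert) set set" where
  "KV = {cls n v | n v. v \<in> lverts (Kn n)}"

definition KE :: "(nat \<times> vert) set set set" where
  "KE = {cls n ` e | n e. e \<in> ledges (Kn n)}"

definition KF :: "(nat \<times> vert) set set set set" where
  "KF = {(\<lambda>e. cls n ` e) ` face_edges l | n l. l \<in> Kn n}"

definition K :: "(nat \<times> vert) set cx" where
  "K = (KV, KE, KF)"

definition within :: "'a set set \<Rightarrow> nat \<Rightarrow> 'a \<Rightarrow> 'a \<Rightarrow> bool" where
  "within E k u v \<longleftrightarrow> (\<exists>xs. xs \<noteq> [] \<and> hd xs = u \<and> last xs = v \<and> length xs \<le> Suc k \<and>
      (\<forall>i. Suc i < length xs \<longrightarrow> {xs ! i, xs ! Suc i} \<in> E))"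

definition ball :: "'a cx \<Rightarrow> 'a \<Rightarrow> nat \<Rightarrow> 'a cx" where
  "ball X v n = (let E = fst (snd X);
                     BF = {f \<in> snd (snd X). \<forall>x \<in> \<Union>f. within E n v x}
                 in (\<Union>(\<Union> BF), \<Union> BF, BF))"

definition cx_iso :: "'a cx \<Rightarrow> 'b cx \<Rightarrow> bool" where
  "cx_iso X Y \<longleftrightarrow> (\<exists>h. bij_betw h (fst X) (fst Y) \<and>
      (image h) ` fst (snd X) = fst (snd Y) \<and>
      (image (image h)) ` snd (snd X) = snd (snd Y))"

end

theory Submission
  imports Defs
begin


primrec lvl :: "vert \<Rightarrow> nat" where
  "lvl (Base i) = 0"
| "lvl (Mid S) = Suc (Max (insert 0 (fset (fimage lvl S))))"
| "lvl (Cen l i) = Suc (Max (insert 0 (set (map lvl l))))"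

lemma lvl_midv: "lvl (midv l i) = Suc (max (lvl (l!i)) (lvl (l!nxt i)))"
  by (simp add: midv_def)

lemma emb_not_Base: "emb x \<noteq> Base i"
  by (cases x) auto

lemma emb_inj: "emb x = emb y \<Longrightarrow> x = y"
proof (induction x arbitrary: y)
  case (Base i)
  then show ?case
  proof (cases y)
    case (Cen l j)
    with Base have "map Base [0..<5] = map emb l" by (simp add: P0_def)
    then show ?thesis by (cases l) (auto simp: upt_rec, metis emb_not_Base)
  qed (auto simp: P0_def)
next
  case (Mid S)
  then show ?case
  proof (cases y)
    case (Mid T)
    with Mid.prems have eq: "emb |`| S = emb |`| T" by simp
    have "fset S \<subseteq> fset T"
    proof
      fix s assume s: "s \<in> fset S"
      then have "emb s \<in> fset (emb |`| T)" using eq by (metis fimage.rep_eq imageI)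
      then obtain t where "t \<in> fset T" "emb s = emb t" by auto
      then show "s \<in> fset T" using Mid.IH s by metis
    qed
    moreover have "fset T \<subseteq> fset S"
    proof
      fix t assume t: "t \<in> fset T"
      then have "emb t \<in> fset (emb |`| S)" using eq by (metis fimage.rep_eq imageI)
      then obtain s where s: "s \<in> fset S" "emb t = emb s" by auto
      then show "t \<in> fset S" using Mid.IH[OF s(1), of t] by metis
    qed
    ultimately show ?thesis using Mid by (simp add: fset_inject)
  qed auto
next
  case (Cen l i)
  then show ?case
  proof (cases y)
    case (Base j) then show ?thesis using Cen.prems by (cases l) (auto simp: P0_def upt_rec emb_not_Base)
  next
    case (Cen l' j)
    with Cen.prems have eq: "map emb l = map emb l'" "i = j" by auto
    have "l = l'"
    proof (rule nth_equalityI)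
      show len: "length l = length l'" using eq(1) by (metis length_map)
      fix k assume k: "k < length l"
      have "emb (l!k) = emb (l'!k)" using eq(1) k len by (metis nth_map)
      then show "l!k = l'!k" using Cen.IH k by (meson nth_mem)
    qed
    then show ?thesis using Cen eq by simp
  qed auto
qed

lemma inj_emb: "inj emb" by (meson emb_inj injI)

definition idx :: "vert list \<Rightarrow> vert \<Rightarrow> nat" where
  "idx l u = (THE j. j < length l \<and> l!j = u)"

lemma idx_eq: "distinct l \<Longrightarrow> j < length l \<Longrightarrow> idx l (l!j) = j"
  unfolding idx_def by (rule the_equality) (auto simp: nth_eq_iff_index_eq)

lemma five_cases: "(i::nat) < 5 \<Longrightarrow> i = 0 \<or> i = 1 \<or> i = 2 \<or> i = 3 \<or> i = 4" by auto

lemma nxt_lt: "nxt i < 5" by (simp add: nxt_def)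
lemma prv_lt: "prv i < 5" by (simp add: prv_def)
lemma nxt_prv: "i < 5 \<Longrightarrow> nxt (prv i) = i" unfolding nxt_def prv_def by (drule five_cases) auto
lemma prv_nxt: "i < 5 \<Longrightarrow> prv (nxt i) = i" unfolding nxt_def prv_def by (drule five_cases) auto
lemma nxt_ne: "i < 5 \<Longrightarrow> nxt i \<noteq> i" unfolding nxt_def by (drule five_cases) auto
lemma prv_ne: "i < 5 \<Longrightarrow> prv i \<noteq> i" unfolding prv_def by (drule five_cases) auto
lemma nxt_ne_prv: "i < 5 \<Longrightarrow> nxt i \<noteq> prv i" unfolding nxt_def prv_def by (drule five_cases) auto

lemma set_central: "set (central l) = {Cen l j | j. j < 5}"
  by (auto simp: central_def cenv_def)

lemma set_petal: "set (petal l i) = {l!i, midv l i, Cen l i, Cen l (prv i), midv l (prv i)}"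
  by (auto simp: petal_def cenv_def)

lemma mem_omega: "f \<in> omega F \<longleftrightarrow> (\<exists>l\<in>F. f = central l \<or> (\<exists>i<5. f = petal l i))"
  by (auto simp: omega_def)

lemma midv_eq: "midv l i = midv l' j \<Longrightarrow> {l!i, l!nxt i} = {l'!j, l'!nxt j}"
  unfolding midv_def by (metis vert.inject(2) finsert.rep_eq bot_fset.rep_eq)

lemma midv_ne_Cen[simp]: "midv l i \<noteq> Cen l' j" "Cen l' j \<noteq> midv l i"
  by (auto simp: midv_def)

lemma petal_inj: "petal l i = petal l' j \<Longrightarrow> l = l' \<and> i = j"
  by (auto simp: petal_def cenv_def)

lemma central_ne_petal: "central l \<noteq> petal l' j"
  by (auto simp: petal_def central_def cenv_def upt_rec midv_def)

definition faces_at :: "vert list set \<Rightarrow> vert \<Rightarrow> vert list set" where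
  "faces_at F u = {f\<in>F. u \<in> set f}"
definition Fc :: "vert list set \<Rightarrow> vert \<Rightarrow> vert \<Rightarrow> vert list set" where
  "Fc F a b = {f\<in>F. a \<in> set f \<and> b \<in> set f}"

lemma Fc_sym: "Fc F a b = Fc F b a" by (auto simp: Fc_def)

definition Inv :: "nat \<Rightarrow> vert list set \<Rightarrow> bool" where
  "Inv m F \<longleftrightarrow> finite F \<and> (\<forall>l\<in>F. length l = 5 \<and> distinct l \<and> (\<forall>v\<in>set l. lvl v \<le> m) \<and>
     (\<forall>k<5. lvl (l!k) = m \<or> lvl (l!nxt k) = m) \<and> (\<forall>k<5. card (Fc F (l!k) (l!nxt k)) \<le> 2))
     \<and> (\<forall>u. card (faces_at F u) \<le> 4)"

lemma finFa: "finite (faces_at G u)" if "finite G" using that by (simp add: faces_at_def)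
lemma card_sub_le: "finite B \<Longrightarrow> A \<subseteq> B \<Longrightarrow> card B \<le> n \<Longrightarrow> card A \<le> (n::nat)"
  by (meson card_mono le_trans)

locale invctx =
  fixes m F assumes inv: "Inv m F"
begin

lemma finF: "finite F" using inv by (simp add: Inv_def)
lemma lenF: "l \<in> F \<Longrightarrow> length l = 5" using inv by (simp add: Inv_def)
lemma distF: "l \<in> F \<Longrightarrow> distinct l" using inv by (simp add: Inv_def)
lemma lvlF: "l \<in> F \<Longrightarrow> v \<in> set l \<Longrightarrow> lvl v \<le> m" using inv by (simp add: Inv_def)
lemma lvlF': "l \<in> F \<Longrightarrow> k < 5 \<Longrightarrow> lvl (l!k) \<le> m" using lvlF lenF by (metis nth_mem)
lemma edgeF: "l \<in> F \<Longrightarrow> k < 5 \<Longrightarrow> lvl (l!k) = m \<or> lvl (l!nxt k) = m" using inv by (simp add: Inv_def)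
lemma FcF: "l \<in> F \<Longrightarrow> k < 5 \<Longrightarrow> card (Fc F (l!k) (l!nxt k)) \<le> 2" using inv by (simp add: Inv_def)
lemma faF: "card (faces_at F u) \<le> 4" using inv by (simp add: Inv_def)

lemma lvl_Cen: "l \<in> F \<Longrightarrow> lvl (Cen l j) = Suc m"
proof -
  assume l: "l \<in> F"
  have "Max (insert 0 (set (map lvl l))) = m"
  proof (rule Max_eqI)
    show "\<And>y. y \<in> insert 0 (set (map lvl l)) \<Longrightarrow> y \<le> m" using lvlF[OF l] by auto
    have "lvl (l!0) = m \<or> lvl (l!nxt 0) = m" using edgeF[OF l, of 0] by simp
    moreover have "l!0 \<in> set l" "l!nxt 0 \<in> set l" using lenF[OF l] nxt_lt by (auto intro: nth_mem)
    ultimately show "m \<in> insert 0 (set (map lvl l))" by auto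
  qed simp
  then show ?thesis by simp
qed

lemma lvl_mid: "l \<in> F \<Longrightarrow> k < 5 \<Longrightarrow> lvl (midv l k) = Suc m"
  using lvl_midv[of l k] edgeF[of l k] lvlF'[of l k] lvlF'[of l "nxt k"] nxt_lt[of k] by auto

lemma faces_Cen: "l \<in> F \<Longrightarrow> j < 5 \<Longrightarrow> faces_at (omega F) (Cen l j) \<subseteq> {central l, petal l j, petal l (nxt j)}"
proof
  fix f assume l: "l \<in> F" and j: "j < 5" and f: "f \<in> faces_at (omega F) (Cen l j)"
  then have fo: "f \<in> omega F" and c: "Cen l j \<in> set f" by (auto simp: faces_at_def)
  from fo obtain l' where l': "l' \<in> F" and fl: "f = central l' \<or> (\<exists>i<5. f = petal l' i)" by (auto simp: mem_omega)
  show "f \<in> {central l, petal l j, petal l (nxt j)}"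
  proof (cases "f = central l'")
    case True then show ?thesis using c by (auto simp: set_central)
  next
    case False
    then obtain i where i: "i < 5" "f = petal l' i" using fl by auto
    have "Cen l j \<noteq> l'!i" using lvl_Cen[OF l, of j] lvlF'[OF l' i(1)] by (metis Suc_n_not_le_n)
    then show ?thesis using c i nxt_prv[OF i(1)] by (auto simp: set_petal)
  qed
qed

lemma faces_old: "l0 \<in> F \<Longrightarrow> u \<in> set l0 \<Longrightarrow> f \<in> faces_at (omega F) u \<Longrightarrow> \<exists>l'\<in>F. u \<in> set l' \<and> f = petal l' (idx l' u)"
proof -
  assume l0: "l0 \<in> F" and u: "u \<in> set l0" and f: "f \<in> faces_at (omega F) u"
  then have fo: "f \<in> omega F" and c: "u \<in> set f" by (auto simp: faces_at_def)
  have lu: "lvl u \<le> m" using lvlF[OF l0 u] .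
  from fo obtain l' where l': "l' \<in> F" and fl: "f = central l' \<or> (\<exists>i<5. f = petal l' i)" by (auto simp: mem_omega)
  show ?thesis
  proof (cases "f = central l'")
    case True then show ?thesis using c lu lvl_Cen[OF l'] by (auto simp: set_central)
  next
    case False
    then obtain i where i: "i < 5" "f = petal l' i" using fl by auto
    have "u \<noteq> midv l' i" "u \<noteq> midv l' (prv i)" "u \<noteq> Cen l' i" "u \<noteq> Cen l' (prv i)"
      using lu lvl_Cen[OF l'] lvl_mid[OF l' i(1)] lvl_mid[OF l' prv_lt] by auto
    then have "u = l'!i" using c i by (auto simp: set_petal)
    then have "u \<in> set l'" "f = petal l' (idx l' u)"
      using i l' idx_eq[OF distF[OF l'], of i] lenF[OF l'] by auto
    then show ?thesis using l' by blast
  qed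
qed

lemma faces_mid: "l \<in> F \<Longrightarrow> k < 5 \<Longrightarrow> f \<in> faces_at (omega F) (midv l k) \<Longrightarrow>
   \<exists>l'\<in> Fc F (l!k) (l!nxt k). \<exists>i<5. f = petal l' i \<and> l'!i \<in> {l!k, l!nxt k}"
proof -
  assume l: "l \<in> F" and k: "k < 5" and f: "f \<in> faces_at (omega F) (midv l k)"
  then have fo: "f \<in> omega F" and c: "midv l k \<in> set f" by (auto simp: faces_at_def)
  from fo obtain l' where l': "l' \<in> F" and fl: "f = central l' \<or> (\<exists>i<5. f = petal l' i)" by (auto simp: mem_omega)
  show ?thesis
  proof (cases "f = central l'")
    case True then show ?thesis using c by (auto simp: set_central)
  next
    case False
    then obtain i where i: "i < 5" "f = petal l' i" using fl by auto
    have "midv l k \<noteq> l'!i" using lvl_mid[OF l k] lvlF'[OF l' i(1)] by auto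
    then have "midv l k = midv l' i \<or> midv l k = midv l' (prv i)" using c i by (auto simp: set_petal)
    then have "{l!k, l!nxt k} = {l'!i, l'!nxt i} \<or> {l!k, l!nxt k} = {l'!prv i, l'!i}"
      using midv_eq nxt_prv[OF i(1)] by metis
    moreover have "l'!i \<in> set l'" "l'!nxt i \<in> set l'" "l'!prv i \<in> set l'"
      using lenF[OF l'] i nxt_lt prv_lt by auto
    ultimately have "l' \<in> Fc F (l!k) (l!nxt k)" "l'!i \<in> {l!k, l!nxt k}"
      using l' by (auto simp: Fc_def doubleton_eq_iff)
    then show ?thesis using i by blast
  qed
qed


end



context invctx
begin

lemma fin_omega: "finite (omega F)"
  using finF unfolding omega_def by (auto intro!: finite_UN_I)


lemma card_img_sub: "finite A \<Longrightarrow> B \<subseteq> g ` A \<Longrightarrow> card A \<le> n \<Longrightarrow> card B \<le> (n::nat)"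
  by (meson card_image_le card_mono finite_imageI le_trans)

lemma card3: "card {a,b,c} \<le> 3"
  using card_length[of "[a,b,c]"] by simp

lemma card2: "card {a,b} \<le> 2"
  using card_length[of "[a,b]"] by simp

lemma fa_Cen: "l \<in> F \<Longrightarrow> j < 5 \<Longrightarrow> card (faces_at (omega F) (Cen l j)) \<le> 4"
  using card_sub_le[OF _ faces_Cen card3] by fastforce

lemma fa_old: "l \<in> F \<Longrightarrow> u \<in> set l \<Longrightarrow> card (faces_at (omega F) u) \<le> 4"
proof -
  assume l: "l \<in> F" and u: "u \<in> set l"
  have "faces_at (omega F) u \<subseteq> (\<lambda>l'. petal l' (idx l' u)) ` faces_at F u"
  proof
    fix f assume "f \<in> faces_at (omega F) u"
    from faces_old[OF l u this] obtain l' where "l' \<in> F" "u \<in> set l'" "f = petal l' (idx l' u)" by blast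
    then show "f \<in> (\<lambda>l'. petal l' (idx l' u)) ` faces_at F u" unfolding faces_at_def by blast
  qed
  then show ?thesis using card_img_sub[OF finFa[OF finF] _ faF] by blast
qed

lemma fa_mid: "l \<in> F \<Longrightarrow> k < 5 \<Longrightarrow> card (faces_at (omega F) (midv l k)) \<le> 4"
proof -
  assume l: "l \<in> F" and k: "k < 5"
  let ?A = "Fc F (l!k) (l!nxt k) \<times> {l!k, l!nxt k}"
  have "faces_at (omega F) (midv l k) \<subseteq> (\<lambda>(l',c). petal l' (idx l' c)) ` ?A"
  proof
    fix f assume "f \<in> faces_at (omega F) (midv l k)"
    from faces_mid[OF l k this] obtain l' i where l': "l' \<in> Fc F (l!k) (l!nxt k)" and
      i: "i < 5" "f = petal l' i" "l'!i \<in> {l!k, l!nxt k}" by blast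
    have "idx l' (l'!i) = i" using idx_eq[of l' i] distF lenF l' i(1) by (auto simp: Fc_def)
    then show "f \<in> (\<lambda>(l',c). petal l' (idx l' c)) ` ?A" using l' i by (auto intro!: image_eqI[of _ _ "(l', l'!i)"])
  qed
  moreover have "finite ?A" using finF by (auto simp: Fc_def)
  moreover have "card ?A \<le> 4"
  proof -
    have "card ?A = card (Fc F (l!k) (l!nxt k)) * card {l!k, l!nxt k}" by (rule card_cartesian_product)
    also have "\<dots> \<le> 2 * 2" using FcF[OF l k] card2 by (intro mult_mono) auto
    finally show ?thesis by simp
  qed
  ultimately show ?thesis using card_img_sub by blast
qed

lemma fa_new: "card (faces_at (omega F) u) \<le> 4"
proof (cases "faces_at (omega F) u = {}")
  case True then show ?thesis by simp
next
  case False
  then obtain f0 where f0: "f0 \<in> omega F" "u \<in> set f0" by (auto simp: faces_at_def)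
  then obtain l where l: "l \<in> F" and fl: "f0 = central l \<or> (\<exists>i<5. f0 = petal l i)"
    by (auto simp: mem_omega)
  show ?thesis
  proof (cases "f0 = central l")
    case True
    then obtain j where "j < 5" "u = Cen l j" using f0 by (auto simp: set_central)
    then show ?thesis using fa_Cen[OF l] by simp
  next
    case False
    then obtain i where i: "i < 5" "f0 = petal l i" using fl by blast
    have p: "prv i < 5" by (rule prv_lt)
    have "u = l!i \<or> u = midv l i \<or> u = Cen l i \<or> u = Cen l (prv i) \<or> u = midv l (prv i)"
      using f0(2) i(2) by (simp add: set_petal)
    then show ?thesis
    proof (elim disjE)
      assume "u = l!i"
      moreover have "l!i \<in> set l" using lenF[OF l] i(1) by simp
      ultimately show ?thesis using fa_old[OF l] by simp
    next
      assume "u = midv l i" then show ?thesis using fa_mid[OF l i(1)] by simp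
    next
      assume "u = Cen l i" then show ?thesis using fa_Cen[OF l i(1)] by simp
    next
      assume "u = Cen l (prv i)" then show ?thesis using fa_Cen[OF l p] by simp
    next
      assume "u = midv l (prv i)" then show ?thesis using fa_mid[OF l p] by simp
    qed
  qed
qed

lemma old_mid: "l \<in> F \<Longrightarrow> j < 5 \<Longrightarrow> c \<in> {l!j, l!nxt j} \<Longrightarrow> card (Fc (omega F) c (midv l j)) \<le> 2"
proof -
  assume l: "l \<in> F" and j: "j < 5" and c: "c \<in> {l!j, l!nxt j}"
  have cl: "c \<in> set l" using c lenF[OF l] j nxt_lt by auto
  have "Fc (omega F) c (midv l j) \<subseteq> (\<lambda>l'. petal l' (idx l' c)) ` Fc F (l!j) (l!nxt j)"
  proof
    fix f assume f: "f \<in> Fc (omega F) c (midv l j)"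
    then have f1: "f \<in> faces_at (omega F) (midv l j)" and f2: "f \<in> faces_at (omega F) c" by (auto simp: Fc_def faces_at_def)
    from faces_mid[OF l j f1] obtain l' i where l': "l' \<in> Fc F (l!j) (l!nxt j)" and i: "f = petal l' i" by blast
    from faces_old[OF l cl f2] obtain l'' where "f = petal l'' (idx l'' c)" by blast
    then have "l' = l''" using i petal_inj by metis
    then show "f \<in> (\<lambda>l'. petal l' (idx l' c)) ` Fc F (l!j) (l!nxt j)" using l' \<open>f = petal l'' _\<close> by blast
  qed
  moreover have "finite (Fc F (l!j) (l!nxt j))" using finF by (simp add: Fc_def)
  ultimately show ?thesis using card_img_sub FcF[OF l j] by blast
qed

lemma mid_cen: "l \<in> F \<Longrightarrow> j < 5 \<Longrightarrow> card (Fc (omega F) (midv l j) (Cen l j)) \<le> 2"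
proof -
  assume l: "l \<in> F" and j: "j < 5"
  have "Fc (omega F) (midv l j) (Cen l j) \<subseteq> {petal l j, petal l (nxt j)}"
    using faces_Cen[OF l j] by (auto simp: Fc_def faces_at_def set_central)
  then show ?thesis by (rule card_sub_le[rotated, OF _ card2]) simp
qed

lemma cen_cen: "l \<in> F \<Longrightarrow> j < 5 \<Longrightarrow> card (Fc (omega F) (Cen l j) (Cen l (nxt j))) \<le> 2"
proof -
  assume l: "l \<in> F" and j: "j < 5"
  have "Cen l (nxt j) \<noteq> l!j" using lvl_Cen[OF l, of "nxt j"] lvlF'[OF l j] by (metis Suc_n_not_le_n)
  then have "Cen l (nxt j) \<notin> set (petal l j)" using nxt_ne[OF j] nxt_ne_prv[OF j] by (auto simp: set_petal)
  then have "Fc (omega F) (Cen l j) (Cen l (nxt j)) \<subseteq> {central l, petal l (nxt j)}"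
    using faces_Cen[OF l j] by (auto simp: Fc_def faces_at_def)
  then show ?thesis by (rule card_sub_le[rotated, OF _ card2]) simp
qed

lemma petal_nth:
  "petal l i ! 0 = l!i" "petal l i ! 1 = midv l i" "petal l i ! 2 = Cen l i"
  "petal l i ! 3 = Cen l (prv i)" "petal l i ! 4 = midv l (prv i)"
  by (auto simp: petal_def cenv_def)

lemma nxt_simps: "nxt 0 = 1" "nxt 1 = 2" "nxt 2 = 3" "nxt 3 = 4" "nxt 4 = 0" "nxt (Suc 0) = 2"
  by (auto simp: nxt_def)

lemma petal_nth1: "petal l i ! Suc 0 = midv l i"
  by (auto simp: petal_def cenv_def)

lemma Fc_new: "f0 \<in> omega F \<Longrightarrow> k < 5 \<Longrightarrow> card (Fc (omega F) (f0!k) (f0!nxt k)) \<le> 2"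
proof -
  assume f0: "f0 \<in> omega F" and k: "k < 5"
  then obtain l where l: "l \<in> F" and fl: "f0 = central l \<or> (\<exists>i<5. f0 = petal l i)" by (auto simp: mem_omega)
  show ?thesis
  proof (cases "f0 = central l")
    case True
    then show ?thesis using cen_cen[OF l k] k nxt_lt[of k] by (simp add: central_def cenv_def)
  next
    case False
    then obtain i where i: "i < 5" "f0 = petal l i" using fl by auto
    have p: "prv i < 5" by (rule prv_lt)
    have np: "l ! nxt (prv i) = l ! i" using nxt_prv[OF i(1)] by simp
    from five_cases[OF k] show ?thesis
    proof (elim disjE)
      assume "k = 0" then show ?thesis using i old_mid[OF l i(1), of "l!i"] by (simp add: petal_nth petal_nth1 nxt_simps del: lvl.simps)
    next
      assume "k = 1" then show ?thesis using i mid_cen[OF l i(1)] by (simp add: petal_nth petal_nth1 nxt_simps del: lvl.simps)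
    next
      assume "k = 2"
      then show ?thesis using i cen_cen[OF l p] nxt_prv[OF i(1)] Fc_sym by (simp add: petal_nth petal_nth1 nxt_simps del: lvl.simps)
    next
      assume "k = 3" then show ?thesis using i mid_cen[OF l p] Fc_sym by (simp add: petal_nth petal_nth1 nxt_simps del: lvl.simps)
    next
      assume "k = 4" then show ?thesis using i old_mid[OF l p, of "l!i"] np Fc_sym by (simp add: petal_nth petal_nth1 nxt_simps del: lvl.simps)
    qed
  qed
qed

lemma Inv_step: "Inv (Suc m) (omega F)"
proof -
  have A: "length f = 5 \<and> distinct f \<and> (\<forall>v\<in>set f. lvl v \<le> Suc m) \<and>
     (\<forall>k<5. lvl (f!k) = Suc m \<or> lvl (f!nxt k) = Suc m)" if f: "f \<in> omega F" for f
  proof -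
    obtain l where l: "l \<in> F" and fl: "f = central l \<or> (\<exists>i<5. f = petal l i)" using f by (auto simp: mem_omega)
    show ?thesis
    proof (cases "f = central l")
      case True
      have "distinct (central l)" by (auto simp: central_def cenv_def distinct_map inj_on_def)
      moreover have "\<forall>k<5. lvl (central l ! k) = Suc m" using lvl_Cen[OF l] by (auto simp: central_def cenv_def)
      ultimately show ?thesis using True lvl_Cen[OF l] nxt_lt by (auto simp: central_def cenv_def)
    next
      case False
      then obtain i where i: "i < 5" "f = petal l i" using fl by auto
      have p: "prv i < 5" by (rule prv_lt)
      have o: "lvl (l!i) \<le> m" using lvlF'[OF l i(1)] .
      have n: "lvl (midv l i) = Suc m" "lvl (midv l (prv i)) = Suc m" "lvl (Cen l i) = Suc m" "lvl (Cen l (prv i)) = Suc m"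
        using lvl_mid[OF l i(1)] lvl_mid[OF l p] lvl_Cen[OF l] by auto
      have ne: "l!i \<noteq> midv l i" "l!i \<noteq> midv l (prv i)" "l!i \<noteq> Cen l i" "l!i \<noteq> Cen l (prv i)"
        using o n by (metis Suc_n_not_le_n)+
      have "midv l i \<noteq> midv l (prv i)"
      proof
        assume "midv l i = midv l (prv i)"
        then have "{l!i, l!nxt i} = {l!prv i, l!i}" using midv_eq nxt_prv[OF i(1)] by metis
        then have "l!i = l!prv i \<or> l!nxt i = l!prv i" by (auto simp: doubleton_eq_iff)
        then show False using distF[OF l] lenF[OF l] i(1) p nxt_lt prv_ne[OF i(1)] nxt_ne_prv[OF i(1)]
          by (metis nth_eq_iff_index_eq)
      qed
      moreover have "Cen l i \<noteq> Cen l (prv i)" using prv_ne[OF i(1)] by simp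
      ultimately have "distinct f" using i ne by (auto simp: petal_def cenv_def)
      moreover have "\<forall>v\<in>set f. lvl v \<le> Suc m" using i o n by (auto simp: set_petal)
      moreover have "\<forall>k<5. lvl (f!k) = Suc m \<or> lvl (f!nxt k) = Suc m"
      proof (intro allI impI)
        fix k :: nat assume "k < 5"
        then show "lvl (f!k) = Suc m \<or> lvl (f!nxt k) = Suc m"
          using i n by (auto dest!: five_cases simp: petal_nth petal_nth1 nxt_simps simp del: lvl.simps)
      qed
      ultimately show ?thesis using i by (simp add: petal_def)
    qed
  qed
  show ?thesis unfolding Inv_def using A Fc_new fa_new fin_omega by blast
qed

end

lemma Inv_0: "Inv 0 {P0}"
proof -
  have "card (Fc {P0} a b) \<le> 2" for a b
    by (rule card_sub_le[of "{P0}"]) (auto simp: Fc_def)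
  moreover have "card (faces_at {P0} u) \<le> 4" for u
    by (rule card_sub_le[of "{P0}"]) (auto simp: faces_at_def)
  ultimately show ?thesis by (auto simp: Inv_def P0_def distinct_map inj_on_def)
qed

lemma Inv_Kn: "Inv n (Kn n)"
  by (induction n) (auto simp: Kn_def Inv_0 invctx_def intro: invctx.Inv_step)



lemma cls_inj: "cls m a = cls m b \<Longrightarrow> a = b"
proof -
  assume h: "cls m a = cls m b"
  have "(m, a) \<in> cls m a" by (simp add: cls_def)
  then have "(m, a) \<in> cls m b" using h by simp
  then have "(emb ^^ m) a = (emb ^^ m) b" by (simp add: cls_def)
  then show "a = b" using inj_fn[OF inj_emb] by (meson injD)
qed

lemma cls_Suc_emb: "cls (Suc m) (emb a) = cls m a"
proof -
  have "(emb ^^ Suc m) w = (emb ^^ k) (emb a) \<longleftrightarrow> (emb ^^ m) w = (emb ^^ k) a" for k w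
  proof -
    have "(emb ^^ Suc m) w = emb ((emb ^^ m) w)" by simp
    moreover have "(emb ^^ k) (emb a) = emb ((emb ^^ k) a)" by (simp add: funpow_swap1)
    ultimately show ?thesis using inj_emb by (metis injD)
  qed
  then show ?thesis by (simp add: cls_def)
qed

lemma Kn_Suc: "Kn (Suc m) = omega (Kn m)" by (simp add: Kn_def)

lemma omega_mono: "F \<subseteq> G \<Longrightarrow> omega F \<subseteq> omega G"
  unfolding omega_def by blast

lemma emb_central: "map emb (central l) = central (map emb l)"
  by (simp add: central_def cenv_def)

lemma emb_petal: "length l = 5 \<Longrightarrow> i < 5 \<Longrightarrow> map emb (petal l i) = petal (map emb l) i"
  using nxt_lt[of i] prv_lt[of i] nxt_lt[of "prv i"]
  by (simp add: petal_def cenv_def midv_def)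

lemma emb_omega: "(\<forall>l\<in>F. length l = 5) \<Longrightarrow> map emb ` omega F \<subseteq> omega (map emb ` F)"
proof
  fix f assume L: "\<forall>l\<in>F. length l = 5" and "f \<in> map emb ` omega F"
  then obtain g where g: "g \<in> omega F" "f = map emb g" by blast
  then obtain l where l: "l \<in> F" and gl: "g = central l \<or> (\<exists>i<5. g = petal l i)" by (auto simp: mem_omega)
  show "f \<in> omega (map emb ` F)"
  proof (cases "g = central l")
    case True then show ?thesis using g l by (auto simp: mem_omega emb_central)
  next
    case False
    then obtain i where "i < 5" "g = petal l i" using gl by blast
    then show ?thesis using g l L emb_petal[of l i] by (auto simp: mem_omega)
  qed
qed

lemma len_Kn: "l \<in> Kn m \<Longrightarrow> length l = 5"
  using Inv_Kn[of m] by (simp add: Inv_def)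

lemma emb_P0: "map emb P0 = central P0"
  by (simp add: P0_def central_def cenv_def)

lemma emb_Kn: "map emb ` Kn m \<subseteq> Kn (Suc m)"
proof (induction m)
  case 0
  then show ?case using emb_P0 by (simp add: Kn_def omega_def)
next
  case (Suc m)
  have "map emb ` Kn (Suc m) = map emb ` omega (Kn m)" by (simp add: Kn_Suc)
  also have "\<dots> \<subseteq> omega (map emb ` Kn m)" using emb_omega len_Kn by blast
  also have "\<dots> \<subseteq> omega (Kn (Suc m))" using omega_mono[OF Suc.IH] .
  finally show ?case by (simp add: Kn_Suc)
qed

lemma emb_edge: "e \<in> ledges (Kn m) \<Longrightarrow> emb ` e \<in> ledges (Kn (Suc m))"
proof -
  assume "e \<in> ledges (Kn m)"
  then obtain l i where l: "l \<in> Kn m" "i < 5" "e = {l!i, l!nxt i}" by (auto simp: ledges_def face_edges_def)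
  have len: "length l = 5" using len_Kn[OF l(1)] .
  have "emb ` e = {map emb l ! i, map emb l ! nxt i}" using l len nxt_lt[of i] by simp
  then have "emb ` e \<in> face_edges (map emb l)" using l(2) by (auto simp: face_edges_def)
  moreover have "map emb l \<in> Kn (Suc m)" using emb_Kn l(1) by blast
  ultimately show ?thesis unfolding ledges_def by blast
qed

definition nbK :: "nat \<Rightarrow> vert \<Rightarrow> vert set" where
  "nbK m a = {b. {a,b} \<in> ledges (Kn m)}"

lemma nbK_bound: "finite (nbK m a) \<and> card (nbK m a) \<le> 20"
proof -
  let ?I = "faces_at (Kn m) a"
  have fin: "finite (Kn m)" using Inv_Kn[of m] unfolding Inv_def by blast
  have cI: "card ?I \<le> 4" using Inv_Kn[of m] unfolding Inv_def by blast
  have sub: "nbK m a \<subseteq> (\<Union>l\<in>?I. set l)"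
  proof
    fix b assume "b \<in> nbK m a"
    then obtain l i where l: "l \<in> Kn m" "i < 5" "{a,b} = {l!i, l!nxt i}"
      by (auto simp: nbK_def ledges_def face_edges_def)
    have "l!i \<in> set l" "l!nxt i \<in> set l" using len_Kn[OF l(1)] l(2) nxt_lt by auto
    then have "a \<in> set l" "b \<in> set l" using l(3) by (auto simp: doubleton_eq_iff)
    then show "b \<in> (\<Union>l\<in>?I. set l)" using l(1) by (auto simp: faces_at_def)
  qed
  have fI: "finite ?I" using fin by (simp add: faces_at_def)
  have "card (\<Union>l\<in>?I. set l) \<le> (\<Sum>l\<in>?I. card (set l))" by (rule card_UN_le[OF fI])
  also have "\<dots> \<le> card ?I * 5"
  proof -
    have "\<And>l. l \<in> ?I \<Longrightarrow> card (set l) \<le> 5"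
      using len_Kn card_length by (metis (no_types, lifting) faces_at_def mem_Collect_eq)
    then have "(\<Sum>l\<in>?I. card (set l)) \<le> of_nat (card ?I) * 5" by (rule sum_bounded_above)
    then show ?thesis by simp
  qed
  also have "\<dots> \<le> 20" using cI by simp
  finally have "card (\<Union>l\<in>?I. set l) \<le> 20" .
  moreover have "finite (\<Union>l\<in>?I. set l)" using fI by simp
  ultimately show ?thesis using sub by (meson card_mono finite_subset le_trans)
qed

definition NbK :: "(nat \<times> vert) set \<Rightarrow> (nat \<times> vert) set set" where
  "NbK x = {y. {x,y} \<in> KE}"

definition Nm :: "(nat \<times> vert) set \<Rightarrow> nat \<Rightarrow> (nat \<times> vert) set set" where
  "Nm x m = {cls m b | a b. cls m a = x \<and> {a,b} \<in> ledges (Kn m)}"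

lemma Nm_bound: "finite (Nm x m) \<and> card (Nm x m) \<le> 20"
proof (cases "\<exists>a. cls m a = x")
  case True
  then obtain a where a: "cls m a = x" by blast
  have "Nm x m \<subseteq> cls m ` nbK m a" using a cls_inj by (auto simp: Nm_def nbK_def)
  then show ?thesis using nbK_bound[of m a]
    by (meson card_image_le card_mono finite_imageI finite_subset le_trans)
next
  case False
  then have "Nm x m = {}" by (auto simp: Nm_def)
  then show ?thesis by simp
qed

lemma Nm_mono: "Nm x m \<subseteq> Nm x (Suc m)"
proof
  fix y assume "y \<in> Nm x m"
  then obtain a b where ab: "y = cls m b" "cls m a = x" "{a,b} \<in> ledges (Kn m)" by (auto simp: Nm_def)
  have "emb ` {a,b} \<in> ledges (Kn (Suc m))" using emb_edge[OF ab(3)] .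
  then have "{emb a, emb b} \<in> ledges (Kn (Suc m))" by simp
  moreover have "y = cls (Suc m) (emb b)" "cls (Suc m) (emb a) = x" using ab cls_Suc_emb by auto
  ultimately show "y \<in> Nm x (Suc m)" unfolding Nm_def by blast
qed

lemma NbK_sub: "NbK x \<subseteq> (\<Union>m. Nm x m)"
proof
  fix y assume "y \<in> NbK x"
  then obtain m e where e: "{x,y} = cls m ` e" "e \<in> ledges (Kn m)" by (auto simp: NbK_def KE_def)
  then obtain l i where l: "e = {l!i, l!nxt i}" by (auto simp: ledges_def face_edges_def)
  then have "{x,y} = {cls m (l!i), cls m (l!nxt i)}" using e by simp
  then have "(x = cls m (l!i) \<and> y = cls m (l!nxt i)) \<or> (x = cls m (l!nxt i) \<and> y = cls m (l!i))"
    by (auto simp: doubleton_eq_iff)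
  moreover have w: "y \<in> Nm x m" if "x = cls m p" "y = cls m q" "{p,q} \<in> ledges (Kn m)" for p q
    using that unfolding Nm_def by blast
  moreover have "{l!i, l!nxt i} \<in> ledges (Kn m)" "{l!nxt i, l!i} \<in> ledges (Kn m)"
    using e(2) l by (auto simp: insert_commute)
  ultimately have "y \<in> Nm x m" by blast
  then show "y \<in> (\<Union>m. Nm x m)" by blast
qed

lemma chain_fin:
  fixes N :: "nat \<Rightarrow> 'a set"
  assumes mono: "\<And>m. N m \<subseteq> N (Suc m)" and b: "\<And>m. finite (N m) \<and> card (N m) \<le> D"
  shows "finite (\<Union>m. N m) \<and> card (\<Union>m. N m) \<le> D"
proof -
  have le: "m \<le> m' \<Longrightarrow> N m \<subseteq> N m'" for m m' using lift_Suc_mono_le[of N, OF mono] by blast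
  have ex: "finite T \<Longrightarrow> T \<subseteq> (\<Union>m. N m) \<Longrightarrow> \<exists>M. T \<subseteq> N M" for T
  proof (induction T rule: finite_induct)
    case empty then show ?case by simp
  next
    case (insert t T)
    then obtain M where M: "T \<subseteq> N M" by blast
    obtain m' where m': "t \<in> N m'" using insert.prems by blast
    have "insert t T \<subseteq> N (max M m')" using M m' le[of M "max M m'"] le[of m' "max M m'"] by auto
    then show ?case by blast
  qed
  have cT: "finite T \<Longrightarrow> T \<subseteq> (\<Union>m. N m) \<Longrightarrow> card T \<le> D" for T
    using ex b by (meson card_mono le_trans)
  have fin: "finite (\<Union>m. N m)"
  proof (rule ccontr)
    assume "infinite (\<Union>m. N m)"
    then obtain T where "finite T" "card T = Suc D" "T \<subseteq> (\<Union>m. N m)"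
      using infinite_arbitrarily_large by blast
    then show False using cT by fastforce
  qed
  then show ?thesis using cT by blast
qed

lemma NbK_bound: "finite (NbK x) \<and> card (NbK x) \<le> 20"
proof -
  have "finite (\<Union>m. Nm x m) \<and> card (\<Union>m. Nm x m) \<le> 20"
    by (rule chain_fin[of "\<lambda>m. Nm x m", OF Nm_mono Nm_bound])
  then show ?thesis using NbK_sub by (meson card_mono finite_subset le_trans)
qed

lemma within_0: "within E 0 u y \<Longrightarrow> y = u"
  unfolding within_def by (metis Suc_leI hd_conv_nth last_conv_nth le_antisym length_greater_0_conv diff_Suc_1 le_simps(3))

lemma within_Suc: "within E (Suc k) u y \<Longrightarrow> within E k u y \<or> (\<exists>z. within E k u z \<and> {z,y} \<in> E)"
proof -
  assume "within E (Suc k) u y"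
  then obtain xs where xs: "xs \<noteq> []" "hd xs = u" "last xs = y" "length xs \<le> Suc (Suc k)"
    "\<And>i. Suc i < length xs \<Longrightarrow> {xs ! i, xs ! Suc i} \<in> E" unfolding within_def by blast
  show ?thesis
  proof (cases "length xs \<le> Suc k")
    case True then show ?thesis using xs unfolding within_def by blast
  next
    case False
    then have len: "length xs = Suc (Suc k)" using xs(4) by simp
    define ys where "ys = butlast xs"
    have ly: "length ys = Suc k" using len by (simp add: ys_def)
    have ny: "\<And>i. i < length ys \<Longrightarrow> ys ! i = xs ! i" by (simp add: ys_def nth_butlast)
    have yne: "ys \<noteq> []" using ly by auto
    have "ys \<noteq> []" by (rule yne)
    moreover have "hd ys = u" using ny ly xs(2) xs(1) by (metis hd_conv_nth yne zero_less_Suc)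
    moreover have "length ys \<le> Suc k" using ly by simp
    moreover have "\<forall>i. Suc i < length ys \<longrightarrow> {ys ! i, ys ! Suc i} \<in> E"
      using ny xs(5) ly len by auto
    moreover have "last ys = xs ! k" using ny[of k] ly yne by (simp add: last_conv_nth)
    ultimately have "within E k u (xs ! k)" unfolding within_def by blast
    moreover have "{xs ! k, y} \<in> E" using xs(5)[of k] xs(3) xs(1) len by (simp add: last_conv_nth)
    ultimately show ?thesis by blast
  qed
qed

lemma W_bound: "finite {y. within KE k v y} \<and> card {y. within KE k v y} \<le> 21 ^ k"
proof (induction k)
  case 0
  have sub: "{y. within KE 0 v y} \<subseteq> {v}"
  proof
    fix y assume "y \<in> {y. within KE 0 v y}"
    then have "within KE 0 v y" by simp
    then have "y = v" by (rule within_0)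
    then show "y \<in> {v}" by simp
  qed
  have f: "finite {y. within KE 0 v y}" using finite_subset[OF sub] by simp
  have c: "card {y. within KE 0 v y} \<le> card {v}" using card_mono[OF _ sub] by simp
  show ?case using f c by simp
next
  case (Suc k)
  let ?W = "{y. within KE k v y}"
  have sub: "{y. within KE (Suc k) v y} \<subseteq> ?W \<union> (\<Union>z\<in>?W. NbK z)"
    using within_Suc unfolding NbK_def by fastforce
  have fW: "finite ?W" and cW: "card ?W \<le> 21 ^ k" using Suc.IH by auto
  have f2: "finite (?W \<union> (\<Union>z\<in>?W. NbK z))" using fW NbK_bound by auto
  have "card (?W \<union> (\<Union>z\<in>?W. NbK z)) \<le> card ?W + card (\<Union>z\<in>?W. NbK z)" by (rule card_Un_le)
  also have "card (\<Union>z\<in>?W. NbK z) \<le> (\<Sum>z\<in>?W. card (NbK z))" by (rule card_UN_le[OF fW])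
  also have "\<dots> \<le> card ?W * 20"
  proof -
    have "\<And>z. z \<in> ?W \<Longrightarrow> card (NbK z) \<le> 20" using NbK_bound by blast
    then have "(\<Sum>z\<in>?W. card (NbK z)) \<le> of_nat (card ?W) * 20" by (rule sum_bounded_above)
    then show ?thesis by simp
  qed
  finally have "card (?W \<union> (\<Union>z\<in>?W. NbK z)) \<le> 21 * card ?W" by simp
  also have "\<dots> \<le> 21 ^ Suc k" using cW by simp
  finally show ?case using sub f2 by (meson card_mono finite_subset le_trans)
qed



theorem lemmal:
  fixes n :: nat
  shows "\<exists>S :: (nat \<times> vert) set cx set. finite S \<and>
           (\<forall>v \<in> fst K. \<exists>B \<in> S. cx_iso (ball K v n) B)"
proof -
  have "inj (\<lambda>k::nat. {(k, Base 0)})" by (auto simp: inj_def)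
  then have "infinite (range (\<lambda>k::nat. {(k, Base 0)}))" using finite_imageD by blast
  then have inf: "infinite (UNIV :: (nat \<times> vert) set set)" by (rule infinite_super[OF subset_UNIV])
  obtain A :: "(nat \<times> vert) set set" where A: "finite A" "card A = 21 ^ n" "A \<subseteq> UNIV"
    using infinite_arbitrarily_large[OF inf] by blast
  define S :: "(nat \<times> vert) set cx set" where
    "S = {X. fst X \<subseteq> A \<and> fst (snd X) \<subseteq> Pow (fst X) \<and> snd (snd X) \<subseteq> Pow (Pow (fst X))}"
  have "S \<subseteq> Pow A \<times> Pow (Pow A) \<times> Pow (Pow (Pow A))"
  proof
    fix X assume X: "X \<in> S"
    obtain V E F where XV: "X = (V, E, F)" by (cases X) auto
    have "V \<subseteq> A" "E \<subseteq> Pow V" "F \<subseteq> Pow (Pow V)" using X XV unfolding S_def by auto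
    then have "V \<in> Pow A" "E \<in> Pow (Pow A)" "F \<in> Pow (Pow (Pow A))" by blast+
    then show "X \<in> Pow A \<times> Pow (Pow A) \<times> Pow (Pow (Pow A))" using XV by simp
  qed
  moreover have "finite (Pow A \<times> Pow (Pow A) \<times> Pow (Pow (Pow A)))" using A(1) by simp
  ultimately have finS: "finite S" by (rule finite_subset)
  have "\<exists>B \<in> S. cx_iso (ball K v n) B" for v
  proof -
    define BF where "BF = {f \<in> KF. \<forall>x \<in> \<Union>f. within KE n v x}"
    define V where "V = \<Union>(\<Union> BF)"
    define E where "E = \<Union> BF"
    have ball: "ball K v n = (V, E, BF)" by (simp add: ball_def K_def Let_def BF_def V_def E_def)
    have VW: "V \<subseteq> {y. within KE n v y}" unfolding V_def BF_def by blast
    have finV: "finite V" and cV: "card V \<le> 21 ^ n"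
      using W_bound[of n v] VW by (auto intro: finite_subset card_mono le_trans dest: card_mono)
    have cV': "card V \<le> card A" using cV A(2) by simp
    obtain h where h: "h ` V \<subseteq> A" "inj_on h V" using card_le_inj[OF finV A(1) cV'] by blast
    define B where "B = (h ` V, image h ` E, image (image h) ` BF)"
    have EV: "e \<subseteq> V" if "e \<in> E" for e using that unfolding E_def V_def by blast
    have FE: "f \<subseteq> E" if "f \<in> BF" for f using that unfolding E_def by blast
    have "B \<in> S"
    proof -
      have "image h ` E \<subseteq> Pow (h ` V)" using EV by blast
      moreover have "image (image h) ` BF \<subseteq> Pow (Pow (h ` V))" using EV FE by blast
      ultimately show ?thesis using h(1) unfolding S_def B_def by simp
    qed
    moreover have "cx_iso (ball K v n) B"
      unfolding ball cx_iso_def B_def using inj_on_imp_bij_betw[OF h(2)] by auto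
    ultimately show ?thesis by blast
  qed
  then show ?thesis using finS by blast
qed

end
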